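(* Let $n\geq 2$, $m_*<m<1$, $c>0$, let $\omega\in\mathbb{R}^n$ be a unit vector and $a:=c\omega$. Define \[ \varphi(y):=A\,(|a||y|+a\cdot y)^{-\frac{1}{1-m}},\qquad A:=\left(\frac{(n-1)m}{1-m}\left(m-\frac{n-3}{n-1}\right)\right)^{\frac{1}{1-m}}, \] for $y\in\mathbb{R}^n\setminus\{-\lambda\omega;\lambda\geq 0\}$. Then on this set \[ \Delta\varphi^m=-a\cdot\nabla\varphi=\frac{A}{1-m}\frac{|a|}{|y|}(|a||y|+a\cdot y)^{-\frac{1}{1-m}}\geq 0, \] so $\varphi$ is a stationary solution of $v_t=\Delta v^m+a\cdot\nabla v$; consequently $u(x,t):=\varphi(x-ta)$ solves $u_t=\Delta u^m$ for $x\notin\{s\omega;-\infty<s\leq ct\}$, and is singular on that set. Moreover, for every $0<\gamma<1$, $(1+\gamma)\varphi(x-ta)$ is a super-solution and $(1-\gamma)\varphi(x-ta)$ is a sub-solution of $u_t=\Delta u^m$ on the same set.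
   Context: $m_*:=0$ if $n=2$ and $m_*:=\frac{n-3}{n-1}$ if $n\geq 3$. Super-/sub-solution means $u_t\geq\Delta u^m$ (resp. $\leq$) pointwise. *)

theory Defs
  imports "HOL-Analysis.Analysis"
begin

definition mstar :: "nat \<Rightarrow> real" where
  "mstar n = (if n = 2 then 0 else (real n - 3) / (real n - 1))"

definition Aconst :: "nat \<Rightarrow> real \<Rightarrow> real" where
  "Aconst n m = ((real n - 1) * m / (1 - m) * (m - (real n - 3) / (real n - 1))) powr (1 / (1 - m))"

definition phi :: "nat \<Rightarrow> real \<Rightarrow> 'a::euclidean_space \<Rightarrow> 'a \<Rightarrow> real" where
  "phi n m a y = Aconst n m * (norm a * norm y + inner a y) powr (- 1 / (1 - m))"

definition has_laplacian :: "('a::euclidean_space \<Rightarrow> real) \<Rightarrow> 'a \<Rightarrow> real \<Rightarrow> bool" where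
  "has_laplacian f y L \<longleftrightarrow>
     (\<exists>d::'a \<Rightarrow> real.
        (\<forall>i\<in>Basis. \<exists>g::real \<Rightarrow> real.
            (\<forall>\<^sub>F s in nhds 0. ((\<lambda>t. f (y + t *\<^sub>R i)) has_real_derivative g s) (at s))
          \<and> (g has_real_derivative d i) (at 0))
      \<and> L = (\<Sum>i\<in>Basis. d i))"

definition pm_solution_at :: "('a::euclidean_space \<Rightarrow> real \<Rightarrow> real) \<Rightarrow> real \<Rightarrow> 'a \<Rightarrow> real \<Rightarrow> bool" where
  "pm_solution_at u m x t \<longleftrightarrow> (\<exists>ut L. ((\<lambda>s. u x s) has_real_derivative ut) (at t)
       \<and> has_laplacian (\<lambda>z. (u z t) powr m) x L \<and> ut = L)"

definition pm_supersolution_at :: "('a::euclidean_space \<Rightarrow> real \<Rightarrow> real) \<Rightarrow> real \<Rightarrow> 'a \<Rightarrow> real \<Rightarrow> bool" where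
  "pm_supersolution_at u m x t \<longleftrightarrow> (\<exists>ut L. ((\<lambda>s. u x s) has_real_derivative ut) (at t)
       \<and> has_laplacian (\<lambda>z. (u z t) powr m) x L \<and> ut \<ge> L)"

definition pm_subsolution_at :: "('a::euclidean_space \<Rightarrow> real \<Rightarrow> real) \<Rightarrow> real \<Rightarrow> 'a \<Rightarrow> real \<Rightarrow> bool" where
  "pm_subsolution_at u m x t \<longleftrightarrow> (\<exists>ut L. ((\<lambda>s. u x s) has_real_derivative ut) (at t)
       \<and> has_laplacian (\<lambda>z. (u z t) powr m) x L \<and> ut \<le> L)"

end

theory Submission
  imports Defs "HOL-Real_Asymp.Real_Asymp"
begin

lemma norm_line_deriv:
  fixes y e :: "'a::euclidean_space"
  assumes "y + s *\<^sub>R e \<noteq> 0"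
  shows "((\<lambda>t. norm (y + t *\<^sub>R e)) has_real_derivative inner (y + s *\<^sub>R e) e / norm (y + s *\<^sub>R e)) (at s)"
proof -
  have "((\<lambda>t. y + t *\<^sub>R e) has_derivative (\<lambda>h. h *\<^sub>R e)) (at s)"
    by (auto intro!: derivative_eq_intros)
  from has_derivative_compose[OF this has_derivative_norm[OF assms]]
  have "((\<lambda>t. norm (y + t *\<^sub>R e)) has_derivative (\<lambda>h. inner (sgn (y + s *\<^sub>R e)) (h *\<^sub>R e))) (at s)"
    by (simp add: o_def inner_commute)
  then show ?thesis unfolding has_field_derivative_def
    by (rule has_derivative_eq_rhs) (auto simp: sgn_div_norm fun_eq_iff inner_commute divide_inverse)
qed

lemma W_line_deriv:
  fixes y e w :: "'a::euclidean_space"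
  assumes "y + s *\<^sub>R e \<noteq> 0"
  shows "((\<lambda>t. c * (norm (y + t *\<^sub>R e) + inner w (y + t *\<^sub>R e))) has_real_derivative
     c * (inner (y + s *\<^sub>R e) e / norm (y + s *\<^sub>R e) + inner w e)) (at s)"
  by (auto intro!: derivative_eq_intros norm_line_deriv[OF assms] simp: inner_add_right)

lemma R_line_deriv:
  fixes y e :: "'a::euclidean_space"
  assumes "y \<noteq> 0"
  shows "((\<lambda>t. inner (y + t *\<^sub>R e) e / norm (y + t *\<^sub>R e)) has_real_derivative
     (inner e e * norm y - inner y e * (inner y e / norm y)) / (norm y)\<^sup>2) (at 0)"
  using assms
  by (auto intro!: derivative_eq_intros norm_line_deriv simp: inner_add_left power2_eq_square)


lemma sum_basis_ids:
  fixes y w :: "'a::euclidean_space"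
  shows "(\<Sum>e\<in>Basis. (inner y e)^2) = (norm y)^2"
    and "(\<Sum>e\<in>Basis. inner y e * inner w e) = inner y w"
proof -
  show "(\<Sum>e\<in>Basis. (inner y e)^2) = (norm y)^2"
  proof -
    have "(\<Sum>e\<in>Basis. (inner y e)^2) = inner y y"
      using euclidean_inner[of y y] by (simp add: power2_eq_square)
    also have "\<dots> = (norm y)^2" by (simp add: power2_norm_eq_inner)
    finally show ?thesis .
  qed
  show "(\<Sum>e\<in>Basis. inner y e * inner w e) = inner y w"
    using euclidean_inner[of y w] by simp
qed

lemma lap_powr:
  fixes y w :: "'a::euclidean_space"
  assumes nw: "norm w = 1" and Wpos: "c * (norm y + inner w y) > 0"
  shows "has_laplacian (\<lambda>z. K * (c * (norm z + inner w z)) powr q) y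
    (K * q * (c / norm y) * (c * (norm y + inner w y)) powr (q - 1) * ((real DIM('a) - 1) + 2 * (q - 1)))"
proof -
  define W where "W z = c * (norm z + inner w z)" for z
  have Wy: "W y > 0" using Wpos by (simp add: W_def)
  have y0: "y \<noteq> 0" using Wy by (auto simp: W_def)
  define r where "r = norm y"
  define z where "z = inner w y"
  have rpos: "r > 0" using y0 by (simp add: r_def)
  have c0: "c \<noteq> 0" and rz: "r + z \<noteq> 0" using Wy by (auto simp: W_def r_def z_def)
  have WW: "W y = c * (r + z)" by (simp add: W_def r_def z_def)
  define P where "P = W y powr (q - 1)"
  define d where "d e = K * (q * ((q - 1) * (P / W y) * (c * (inner y e / r + inner w e)) * (c * (inner y e / r + inner w e))
     + P * (c * ((inner e e * r - inner y e * (inner y e / r)) / r^2))))" for e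
  have deriv_g: "\<exists>g. (\<forall>\<^sub>F s in nhds 0. ((\<lambda>t. K * W (y + t *\<^sub>R e) powr q) has_real_derivative g s) (at s))
      \<and> (g has_real_derivative d e) (at 0)" for e :: 'a
  proof (intro exI conjI)
    define g where "g s = K * (q * W (y + s *\<^sub>R e) powr (q - 1) * (c * (inner (y + s *\<^sub>R e) e / norm (y + s *\<^sub>R e) + inner w e)))" for s
    let ?S = "{s. 0 < W (y + s *\<^sub>R e)}"
    have "open ?S" unfolding W_def
      by (rule open_Collect_less) (auto intro!: continuous_intros)
    moreover have "0 \<in> ?S" using Wy by simp
    moreover have "((\<lambda>t. K * W (y + t *\<^sub>R e) powr q) has_real_derivative g s) (at s)" if "s \<in> ?S" for s
    proof -
      from that have ne: "y + s *\<^sub>R e \<noteq> 0" by (auto simp: W_def)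
      have "((\<lambda>t. W (y + t *\<^sub>R e)) has_real_derivative c * (inner (y + s *\<^sub>R e) e / norm (y + s *\<^sub>R e) + inner w e)) (at s)"
        unfolding W_def by (rule W_line_deriv[OF ne])
      from DERIV_cmult[OF DERIV_fun_powr[OF this, of q], of K] that
      show ?thesis by (simp add: g_def mult.assoc)
    qed
    ultimately show "\<forall>\<^sub>F s in nhds 0. ((\<lambda>t. K * W (y + t *\<^sub>R e) powr q) has_real_derivative g s) (at s)"
      by (auto simp: eventually_nhds)
    have h1: "((\<lambda>s. W (y + s *\<^sub>R e)) has_real_derivative c * (inner y e / r + inner w e)) (at 0)"
      using W_line_deriv[of y 0 e c w] y0 by (simp add: W_def r_def)
    have h2: "((\<lambda>s. W (y + s *\<^sub>R e) powr (q - 1)) has_real_derivative (q - 1) * (P / W y) * (c * (inner y e / r + inner w e))) (at 0)"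
      apply (rule DERIV_cong[OF DERIV_fun_powr[OF h1, of "q - 1"]])
      using Wy apply simp
    proof -
      have "W y powr (q - 1 - real 1) = P / W y"
        using Wy unfolding P_def by (simp add: powr_diff power2_eq_square)
      then show "(q - 1) * W (y + 0 *\<^sub>R e) powr (q - 1 - real 1) * (c * (inner y e / r + inner w e)) =
        (q - 1) * (P / W y) * (c * (inner y e / r + inner w e))" by simp
    qed
    have h3: "((\<lambda>s. c * (inner (y + s *\<^sub>R e) e / norm (y + s *\<^sub>R e) + inner w e)) has_real_derivative
        c * ((inner e e * r - inner y e * (inner y e / r)) / r^2)) (at 0)"
      using DERIV_cmult[OF DERIV_add[OF R_line_deriv[OF y0, of e] DERIV_const[of "inner w e"]], of c]
      by (simp add: r_def)
    have "((\<lambda>s. W (y + s *\<^sub>R e) powr (q - 1) * (c * (inner (y + s *\<^sub>R e) e / norm (y + s *\<^sub>R e) + inner w e))) has_real_derivative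
        (q - 1) * (P / W y) * (c * (inner y e / r + inner w e)) * (c * (inner y e / r + inner w e))
        + P * (c * ((inner e e * r - inner y e * (inner y e / r)) / r^2))) (at 0)"
      by (rule DERIV_cong[OF DERIV_mult[OF h2 h3]]) (simp add: P_def r_def)
    from DERIV_cmult[OF DERIV_cmult[OF this, of q], of K]
    show "(g has_real_derivative d e) (at 0)"
      unfolding g_def d_def by (simp only: mult.assoc)
  qed
  define \<alpha> where "\<alpha> = K * q * P * c / r"
  define \<beta> where "\<beta> = K * q * P * ((q - 1) * c^2 / (W y * r^2) - c / r^3)"
  define \<gamma> where "\<gamma> = K * q * (q - 1) * (P / W y) * c^2 * 2 / r"
  define \<delta> where "\<delta> = K * q * (q - 1) * (P / W y) * c^2"
  have dexp: "d e = \<alpha> + \<beta> * (inner y e)^2 + \<gamma> * (inner y e * inner w e) + \<delta> * (inner w e)^2"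
    if "e \<in> Basis" for e :: 'a
    using that rpos Wy unfolding d_def \<alpha>_def \<beta>_def \<gamma>_def \<delta>_def
    by (simp add: field_simps power2_eq_square power3_eq_cube)
  have "(\<Sum>e\<in>Basis. d e) = (\<Sum>e\<in>Basis. \<alpha> + \<beta> * (inner y e)^2 + \<gamma> * (inner y e * inner w e) + \<delta> * (inner w e)^2)"
    by (rule sum.cong) (simp_all add: dexp)
  also have "\<dots> = real DIM('a) * \<alpha> + \<beta> * r^2 + \<gamma> * z + \<delta>"
    using sum_basis_ids(1)[of y] sum_basis_ids(2)[of y w] sum_basis_ids(1)[of w] nw
    by (simp add: sum.distrib sum_distrib_left[symmetric] r_def z_def inner_commute power2_eq_square)
  also have "\<dots> = K * q * (c / r) * P * ((real DIM('a) - 1) + 2 * (q - 1))"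
    unfolding \<alpha>_def \<beta>_def \<gamma>_def \<delta>_def using rpos Wy
    apply (simp add: field_simps power2_eq_square power3_eq_cube)
    apply (simp add: WW algebra_simps)
    done
  also have "\<dots> = K * q * (c / norm y) * W y powr (q - 1) * ((real DIM('a) - 1) + 2 * (q - 1))"
    by (simp add: P_def r_def)
  finally have sumd: "(\<Sum>e\<in>Basis. d e) = K * q * (c / norm y) * W y powr (q - 1) * ((real DIM('a) - 1) + 2 * (q - 1))" .
  show ?thesis
    unfolding has_laplacian_def
    apply (rule exI[of _ d])
    using deriv_g sumd by (simp add: W_def)
qed


lemma powr_neg_at_right: "(p::real) < 0 \<Longrightarrow> filterlim (\<lambda>x::real. x powr p) at_top (at_right 0)"
  by real_asymp

lemma omega_char:
  fixes \<omega> y :: "'a::euclidean_space"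
  assumes "norm \<omega> = 1"
  shows "y \<in> - {y. \<exists>l\<ge>0. y = - (l *\<^sub>R \<omega>)} \<longleftrightarrow> norm y + inner \<omega> y > 0"
proof
  assume "norm y + inner \<omega> y > 0"
  moreover have "inner \<omega> \<omega> = 1" using assms by (simp flip: power2_norm_eq_inner)
  ultimately show "y \<in> - {y. \<exists>l\<ge>0. y = - (l *\<^sub>R \<omega>)}" using assms by auto
next
  assume y: "y \<in> - {y. \<exists>l\<ge>0. y = - (l *\<^sub>R \<omega>)}"
  show "norm y + inner \<omega> y > 0"
  proof (rule ccontr)
    assume "\<not> ?thesis"
    moreover have "\<bar>inner \<omega> y\<bar> \<le> norm y" using Cauchy_Schwarz_ineq2[of \<omega> y] assms by simp
    ultimately have iz: "inner \<omega> y = - norm y" by linarith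
    have "(norm (y + norm y *\<^sub>R \<omega>))^2 = inner (y + norm y *\<^sub>R \<omega>) (y + norm y *\<^sub>R \<omega>)"
      by (rule power2_norm_eq_inner)
    also have "\<dots> = inner y y + 2 * norm y * inner \<omega> y + (norm y)^2 * inner \<omega> \<omega>"
      by (simp add: inner_add_left inner_add_right inner_commute power2_eq_square algebra_simps)
    also have "\<dots> = 0" using iz assms by (simp add: power2_norm_eq_inner[symmetric] power2_eq_square)
    finally have "y = - (norm y *\<^sub>R \<omega>)" by (simp add: eq_neg_iff_add_eq_0)
    with y show False by auto
  qed
qed

lemma W_frechet:
  fixes y w :: "'a::euclidean_space"
  assumes "y \<noteq> 0"
  shows "((\<lambda>z. c * (norm z + inner w z)) has_derivative (\<lambda>h. c * (inner y h / norm y + inner w h))) (at y)"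
proof -
  have 1: "((\<lambda>z. norm z) has_derivative (\<lambda>h. inner h (sgn y))) (at y)"
    using has_derivative_norm[OF assms] .
  have 2: "((\<lambda>z. inner w z) has_derivative (\<lambda>h. inner w h)) (at y)"
    by (rule bounded_linear_imp_has_derivative[OF bounded_linear_inner_right])
  have "((\<lambda>z. c * (norm z + inner w z)) has_derivative (\<lambda>h. c * (inner h (sgn y) + inner w h))) (at y)"
    by (rule has_derivative_mult_right[OF has_derivative_add[OF 1 2]])
  then show ?thesis
    by (rule has_derivative_eq_rhs) (simp add: fun_eq_iff sgn_div_norm inner_commute divide_inverse)
qed

lemma powrW_frechet:
  fixes y w :: "'a::euclidean_space"
  assumes y0: "y \<noteq> 0" and Wy: "c * (norm y + inner w y) > 0"
  shows "((\<lambda>z. A * (c * (norm z + inner w z)) powr p) has_derivative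
     (\<lambda>h. A * (p * (c * (norm y + inner w y)) powr p / (c * (norm y + inner w y)) * (c * (inner y h / norm y + inner w h))))) (at y)"
proof -
  let ?W = "c * (norm y + inner w y)"
  have d: "((\<lambda>x. x powr p) has_real_derivative p * ?W powr (p - 1)) (at ?W)"
    using DERIV_fun_powr[OF DERIV_ident Wy, of p] by simp
  have e: "?W powr (p - 1) = ?W powr p / ?W" using Wy by (simp add: powr_diff)
  from has_derivative_compose[OF W_frechet[OF y0, of c w] d[unfolded has_field_derivative_def]]
  have "((\<lambda>z. (c * (norm z + inner w z)) powr p) has_derivative
     (\<lambda>h. p * ?W powr (p - 1) * (c * (inner y h / norm y + inner w h)))) (at y)"
    by (simp add: o_def)
  from has_derivative_mult_right[OF this, of A]
  show ?thesis
    apply (rule has_derivative_eq_rhs)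
    apply (simp only: e)
    apply (simp add: fun_eq_iff)
    done
qed
lemma lap_transl:
  assumes "has_laplacian f (x - v) L"
  shows "has_laplacian (\<lambda>z. f (z - v)) x L"
  using assms unfolding has_laplacian_def by (simp add: diff_add_eq)

lemma lap_scale:
  assumes "has_laplacian f y L"
  shows "has_laplacian (\<lambda>z. k * f z) y (k * L)"
proof -
  from assms obtain d where d: "\<forall>i\<in>Basis. \<exists>g::real \<Rightarrow> real.
            (\<forall>\<^sub>F s in nhds 0. ((\<lambda>t. f (y + t *\<^sub>R i)) has_real_derivative g s) (at s))
          \<and> (g has_real_derivative d i) (at 0)" and L: "L = (\<Sum>i\<in>Basis. d i)"
    unfolding has_laplacian_def by blast
  show ?thesis unfolding has_laplacian_def
  proof (intro exI[of _ "\<lambda>i. k * d i"] conjI ballI)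
    fix i :: 'a assume "i \<in> Basis"
    with d obtain g where g1: "\<forall>\<^sub>F s in nhds 0. ((\<lambda>t. f (y + t *\<^sub>R i)) has_real_derivative g s) (at s)"
      and g2: "(g has_real_derivative d i) (at 0)" by blast
    show "\<exists>g. (\<forall>\<^sub>F s in nhds 0. ((\<lambda>t. k * f (y + t *\<^sub>R i)) has_real_derivative g s) (at s))
          \<and> (g has_real_derivative k * d i) (at 0)"
      by (intro exI[of _ "\<lambda>s. k * g s"] conjI DERIV_cmult g2 eventually_mono[OF g1]) auto
  qed (simp add: L sum_distrib_left)
qed


theorem mainTheorem2:
  fixes \<omega> :: "'a::euclidean_space" and m c :: real
  assumes n2: "DIM('a) \<ge> 2"
    and mlow: "mstar DIM('a) < m" and mup: "m < 1"
    and cpos: "c > 0"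
    and unit: "norm \<omega> = 1"
  defines "a \<equiv> c *\<^sub>R \<omega>"
  defines "\<Omega> \<equiv> - {y. \<exists>l\<ge>0. y = - (l *\<^sub>R \<omega>)}"
  defines "\<phi> \<equiv> phi DIM('a) m a"
  defines "A \<equiv> Aconst DIM('a) m"
  shows
    "(\<forall>y\<in>\<Omega>. \<exists>D L. (\<phi> has_derivative D) (at y)
        \<and> has_laplacian (\<lambda>z. (\<phi> z) powr m) y L
        \<and> L = - D a
        \<and> L = A / (1 - m) * (norm a / norm y) * (norm a * norm y + inner a y) powr (- 1 / (1 - m))
        \<and> L \<ge> 0)
   \<and> (\<forall>x t. x - t *\<^sub>R a \<in> \<Omega> \<longrightarrow> pm_solution_at (\<lambda>x t. \<phi> (x - t *\<^sub>R a)) m x t)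
   \<and> (\<forall>t x0. x0 \<in> {s *\<^sub>R \<omega> | s. s \<le> c * t} \<longrightarrow>
        filterlim (\<lambda>x. \<phi> (x - t *\<^sub>R a)) at_top (at x0 within {x. x - t *\<^sub>R a \<in> \<Omega>}))
   \<and> (\<forall>\<gamma>. 0 < \<gamma> \<and> \<gamma> < 1 \<longrightarrow>
        (\<forall>x t. x - t *\<^sub>R a \<in> \<Omega> \<longrightarrow>
            pm_supersolution_at (\<lambda>x t. (1 + \<gamma>) * \<phi> (x - t *\<^sub>R a)) m x t
          \<and> pm_subsolution_at (\<lambda>x t. (1 - \<gamma>) * \<phi> (x - t *\<^sub>R a)) m x t))"
proof -
  define n where "n = real DIM('a)"
  have n2': "n \<ge> 2" using n2 by (simp add: n_def)
  define B where "B = (n - 1) * m / (1 - m) * (m - (n - 3) / (n - 1))"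
  have m0: "m > 0"
  proof (cases "DIM('a) = 2")
    case True then show ?thesis using mlow by (simp add: mstar_def)
  next
    case False
    then have "real DIM('a) \<ge> 3" using n2 by linarith
    then have "(real DIM('a) - 3) / (real DIM('a) - 1) \<ge> 0" by simp
    then show ?thesis using mlow False by (simp add: mstar_def)
  qed
  have "m - (n - 3) / (n - 1) > 0"
  proof (cases "DIM('a) = 2")
    case True then show ?thesis using m0 by (simp add: n_def)
  next
    case False then show ?thesis using mlow by (simp add: mstar_def n_def)
  qed
  then have Bpos: "B > 0" unfolding B_def using m0 mup n2' by simp
  have Adef: "A = B powr (1 / (1 - m))" by (simp add: A_def Aconst_def B_def n_def)
  have Apos: "A > 0" using Bpos by (simp add: Adef)
  define W where "W z = c * (norm z + inner \<omega> z)" for z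
  define p where "p = - 1 / (1 - m)"
  define q where "q = - m / (1 - m)"
  have na: "norm a = c" using cpos unit by (simp add: a_def)
  have phiW: "\<phi> z = A * W z powr p" for z
    using cpos unit by (simp add: \<phi>_def phi_def A_def W_def p_def a_def algebra_simps)
  have Wnn: "W z \<ge> 0" for z
    using Cauchy_Schwarz_ineq2[of \<omega> z] unit cpos unfolding W_def by (intro mult_nonneg_nonneg) (auto simp: abs_le_iff)
  have Wpos: "W y > 0 \<longleftrightarrow> y \<in> \<Omega>" for y
    using omega_char[OF unit, of y] cpos unfolding \<Omega>_def W_def by (simp add: zero_less_mult_iff)
  have phim: "\<phi> z powr m = A powr m * W z powr q" for z
    using Apos Wnn[of z] mup
    by (simp add: phiW powr_mult powr_powr p_def q_def)
  have phinn: "\<phi> z \<ge> 0" for z using Apos by (simp add: phiW)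
  have qid: "q * ((n - 1) + 2 * (q - 1)) = B / (1 - m)"
  proof -
    have h1: "m \<noteq> 1" and h2: "n \<noteq> 1" using mup n2' by auto
    have h3: "1 - m \<noteq> 0" and h4: "n - 1 \<noteq> 0" using mup n2' by auto
    show ?thesis unfolding q_def B_def using h1 h2 h3 h4
      by (simp add: divide_simps) (simp add: algebra_simps)
  qed
  have AB: "A powr m * B = A"
  proof -
    have "A powr m * B = B powr (m / (1 - m)) * B powr 1"
      using Bpos by (simp add: Adef powr_powr)
    also have "\<dots> = B powr (m / (1 - m) + 1)" by (simp add: powr_add)
    also have "m / (1 - m) + 1 = 1 / (1 - m)" using mup by (simp add: field_simps)
    finally show ?thesis by (simp add: Adef)
  qed
  have pq: "q - 1 = p" using mup unfolding p_def q_def by (simp add: field_simps)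
  define D where "D y h = A * (p * W y powr p / W y * (c * (inner y h / norm y + inner \<omega> h)))" for y h
  define L where "L y = A / (1 - m) * (c / norm y) * W y powr p" for y
  have Ly: "L y = A / (1 - m) * (norm a / norm y) * (norm a * norm y + inner a y) powr (- 1 / (1 - m))" for y
    using cpos unit by (simp add: L_def W_def p_def a_def algebra_simps)
  have part1: "(\<phi> has_derivative D y) (at y) \<and> has_laplacian (\<lambda>z. (\<phi> z) powr m) y (L y)
        \<and> L y = - D y a \<and> L y \<ge> 0" if y: "y \<in> \<Omega>" for y
  proof (intro conjI)
    have Wy: "W y > 0" using Wpos y by simp
    then have y0: "y \<noteq> 0" by (auto simp: W_def)
    have "((\<lambda>z. A * W z powr p) has_derivative D y) (at y)"
      unfolding W_def D_def
      by (rule powrW_frechet[OF y0]) (use Wy in \<open>simp add: W_def\<close>)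
    then show "(\<phi> has_derivative D y) (at y)" by (simp add: phiW[abs_def])
    have "has_laplacian (\<lambda>z. A powr m * W z powr q) y
       (A powr m * q * (c / norm y) * W y powr (q - 1) * ((n - 1) + 2 * (q - 1)))"
      using lap_powr[OF unit, of c y "A powr m" q] Wy by (simp add: W_def n_def)
    moreover have "A powr m * q * (c / norm y) * W y powr (q - 1) * ((n - 1) + 2 * (q - 1)) = L y"
    proof -
      have "A powr m * q * (c / norm y) * W y powr (q - 1) * ((n - 1) + 2 * (q - 1))
          = A powr m * (q * ((n - 1) + 2 * (q - 1))) * (c / norm y) * W y powr (q - 1)"
        by (simp only: mult_ac)
      also have "\<dots> = A powr m * (B / (1 - m)) * (c / norm y) * W y powr p"
        by (simp only: qid, simp only: pq)
      also have "\<dots> = (A powr m * B) / (1 - m) * (c / norm y) * W y powr p"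
        by simp
      finally show ?thesis by (simp add: AB L_def)
    qed
    ultimately show "has_laplacian (\<lambda>z. (\<phi> z) powr m) y (L y)" by (simp add: phim)
    have "D y a = A * (p * W y powr p / W y * (c * (c * (inner \<omega> y / norm y + 1))))"
      using unit by (simp add: D_def a_def inner_commute power2_norm_eq_inner[symmetric] distrib_left)
    also have "c * (c * (inner \<omega> y / norm y + 1)) = W y * c / norm y"
      using y0 by (simp add: W_def field_simps)
    finally have "D y a = A * (p * W y powr p / W y * (W y * c / norm y))" .
    also have "\<dots> = A * p * (c / norm y) * W y powr p" using Wy by (simp add: field_simps)
    finally show "L y = - D y a" by (simp add: L_def p_def)
    show "L y \<ge> 0" using Apos mup cpos by (simp add: L_def)
  qed
  have tderiv: "((\<lambda>s. \<phi> (x - s *\<^sub>R a)) has_real_derivative L (x - t *\<^sub>R a)) (at t)"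
    if "x - t *\<^sub>R a \<in> \<Omega>" for x t
  proof -
    let ?y = "x - t *\<^sub>R a"
    from part1[OF that] have dd: "(\<phi> has_derivative D ?y) (at ?y)" and Le: "L ?y = - D ?y a" by auto
    have lin: "linear (D ?y)" using dd has_derivative_linear by blast
    have "((\<lambda>s. x - s *\<^sub>R a) has_derivative (\<lambda>h. - (h *\<^sub>R a))) (at t)"
      by (auto intro!: derivative_eq_intros)
    from has_derivative_compose[OF this dd]
    have "((\<lambda>s. \<phi> (x - s *\<^sub>R a)) has_derivative (\<lambda>h. D ?y (- (h *\<^sub>R a)))) (at t)" by (simp add: o_def)
    then show ?thesis unfolding has_field_derivative_def
      by (rule has_derivative_eq_rhs) (simp add: fun_eq_iff Le linear_neg[OF lin] linear_cmul[OF lin])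
  qed
  have xlap: "has_laplacian (\<lambda>z. (\<phi> (z - t *\<^sub>R a)) powr m) x (L (x - t *\<^sub>R a))"
    if "x - t *\<^sub>R a \<in> \<Omega>" for x t
    using part1[OF that] by (intro lap_transl[where f = "\<lambda>z. \<phi> z powr m"]) auto
  show ?thesis
  proof (intro conjI allI impI ballI)
    fix y assume "y \<in> \<Omega>"
    with part1[OF this] show "\<exists>D L. (\<phi> has_derivative D) (at y)
        \<and> has_laplacian (\<lambda>z. (\<phi> z) powr m) y L
        \<and> L = - D a
        \<and> L = A / (1 - m) * (norm a / norm y) * (norm a * norm y + inner a y) powr (- 1 / (1 - m))
        \<and> L \<ge> 0" using Ly by blast
  next
    fix x t assume "x - t *\<^sub>R a \<in> \<Omega>"
    with tderiv[OF this] xlap[OF this]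
    show "pm_solution_at (\<lambda>x t. \<phi> (x - t *\<^sub>R a)) m x t"
      unfolding pm_solution_at_def by blast
  next
    fix gm :: real and x t assume g: "0 < gm \<and> gm < 1" and xt: "x - t *\<^sub>R a \<in> \<Omega>"
    have L0: "L (x - t *\<^sub>R a) \<ge> 0" using part1[OF xt] by auto
    have lapk: "has_laplacian (\<lambda>z. (k * \<phi> (z - t *\<^sub>R a)) powr m) x (k powr m * L (x - t *\<^sub>R a))"
      if "k \<ge> 0" for k
    proof -
      have "(\<lambda>z. (k * \<phi> (z - t *\<^sub>R a)) powr m) = (\<lambda>z. k powr m * (\<phi> (z - t *\<^sub>R a)) powr m)"
        using that phinn by (simp add: powr_mult)
      then show ?thesis using lap_scale[OF xlap[OF xt]] by simp
    qed
    have tk: "((\<lambda>s. k * \<phi> (x - s *\<^sub>R a)) has_real_derivative k * L (x - t *\<^sub>R a)) (at t)" for k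
      by (rule DERIV_cmult[OF tderiv[OF xt]])
    have i1: "(1 + gm) powr m \<le> (1 + gm)"
      using powr_mono[of m 1 "1 + gm"] g mup by simp
    have i2: "(1 - gm) powr m \<ge> (1 - gm)"
      using powr_mono'[of m 1 "1 - gm"] g mup by simp
    show "pm_supersolution_at (\<lambda>x t. (1 + gm) * \<phi> (x - t *\<^sub>R a)) m x t"
      unfolding pm_supersolution_at_def
      using tk[of "1 + gm"] lapk[of "1 + gm"] g L0 i1
      by (intro exI[of _ "(1 + gm) * L (x - t *\<^sub>R a)"] exI[of _ "(1 + gm) powr m * L (x - t *\<^sub>R a)"] conjI)
         (auto intro: mult_right_mono)
    show "pm_subsolution_at (\<lambda>x t. (1 - gm) * \<phi> (x - t *\<^sub>R a)) m x t"
      unfolding pm_subsolution_at_def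
      using tk[of "1 - gm"] lapk[of "1 - gm"] g L0 i2
      by (intro exI[of _ "(1 - gm) * L (x - t *\<^sub>R a)"] exI[of _ "(1 - gm) powr m * L (x - t *\<^sub>R a)"] conjI)
         (auto intro: mult_right_mono)
  next
    fix t x0 assume "x0 \<in> {s *\<^sub>R \<omega> | s. s \<le> c * t}"
    then obtain s where x0: "x0 = s *\<^sub>R \<omega>" and s: "s \<le> c * t" by auto
    let ?F = "at x0 within {x. x - t *\<^sub>R a \<in> \<Omega>}"
    have "((\<lambda>x. W (x - t *\<^sub>R a)) \<longlongrightarrow> W (x0 - t *\<^sub>R a)) ?F"
      unfolding W_def by (intro tendsto_intros)
    moreover have "W (x0 - t *\<^sub>R a) = 0"
    proof -
      have "x0 - t *\<^sub>R a = (s - c * t) *\<^sub>R \<omega>" by (simp add: x0 a_def algebra_simps)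
      then show ?thesis using s unit by (simp add: W_def power2_norm_eq_inner[symmetric])
    qed
    moreover have "\<forall>\<^sub>F x in ?F. W (x - t *\<^sub>R a) \<in> {0<..} \<and> W (x - t *\<^sub>R a) \<noteq> 0"
    proof -
      have "\<forall>x. x \<noteq> x0 \<longrightarrow> x \<in> {x. x - t *\<^sub>R a \<in> \<Omega>} \<longrightarrow> W (x - t *\<^sub>R a) \<in> {0<..} \<and> W (x - t *\<^sub>R a) \<noteq> 0"
        using Wpos by force
      then show ?thesis unfolding eventually_at_filter by (intro always_eventually) blast
    qed
    ultimately have "filterlim (\<lambda>x. W (x - t *\<^sub>R a)) (at_right 0) ?F"
      by (simp add: filterlim_at)
    from filterlim_compose[OF powr_neg_at_right this, of p]
    have "filterlim (\<lambda>x. W (x - t *\<^sub>R a) powr p) at_top ?F" using mup by (simp add: p_def)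
    from filterlim_tendsto_pos_mult_at_top[OF tendsto_const Apos this]
    show "filterlim (\<lambda>x. \<phi> (x - t *\<^sub>R a)) at_top ?F" by (simp add: phiW)
  qed
qed

end
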